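(* Let $T$ be a $P$-Petri net, let $\rho$ be a $P$-configuration, let $Q\subseteq P$ be such that $\rho|_Q$ is $T|_Q$-bottom, let $s$ be the cardinality of the $T|_Q$-component of $\rho|_Q$, and let $d=|P\setminus Q|$. There exist a word $\sigma\in T^*$ with $|\sigma|\leq(1+d(1+s\|T\|_\infty+\|\rho\|_\infty)^{d^d})s$ and a $P$-configuration $\rho'$ with $\rho\xrightarrow{\sigma}\rho'$ such that either (1) $\rho'|_Q=\rho|_Q$ and $\rho'(p)>\rho(p)$ for every $p\in P\setminus Q$, or (2) there exists a set $Q'\subseteq P$ strictly containing $Q$ such that $\rho'|_{Q'}$ is $T|_{Q'}$-bottom and the cardinality $s'$ of the $T|_{Q'}$-component of $\rho'|_{Q'}$ satisfies $s'\leq(1+d(1+s\|T\|_\infty+\|\rho\|_\infty)^{d^d})s$.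
   Context: A $P$-configuration is a map in $\mathbb{N}^P$, $\|\rho\|_\infty=\max_p\rho(p)$. For a finite set $Q$, $\rho|_Q$ is the $Q$-configuration with $\rho|_Q(q)=\rho(q)$ if $q\in P$ and $0$ otherwise. A $P$-Petri net $T$ is a finite set of transitions $t=(\alpha_t,\beta_t)$ (pairs of $P$-configurations); $\alpha\xrightarrow{t}\beta$ iff $\alpha=\alpha_t+\gamma$, $\beta=\beta_t+\gamma$ for some configuration $\gamma$; for a word $\sigma=t_1\cdots t_k$ ($|\sigma|=k$), $\xrightarrow{\sigma}$ is the composition; $\alpha\xrightarrow{T^*}\beta$ iff $\alpha\xrightarrow{\sigma}\beta$ for some $\sigma\in T^*$. $\|T\|_\infty$ is the maximum entry among all $\alpha_t,\beta_t$, $t\in T$. $t|_Q=(\alpha_t|_Q,\beta_t|_Q)$ and $T|_Q=\{t|_Q\mid t\in T\}$. The $T$-component of $\rho$ is the set of $\beta$ with $\rho\xrightarrow{T^*}\beta\xrightarrow{T^*}\rho$; $\rho$ is $T$-bottom if its $T$-component is finite and every $\beta$ with $\rho\xrightarrow{T^*}\beta$ satisfies $\beta\xrightarrow{T^*}\rho$. *)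

theory Defs
  imports Main
begin

type_synonym 'p config = "'p \<Rightarrow> nat"
type_synonym 'p trans = "'p config \<times> 'p config"

definition is_config :: "'p set \<Rightarrow> 'p config \<Rightarrow> bool" where
  "is_config P \<rho> \<longleftrightarrow> (\<forall>p. p \<notin> P \<longrightarrow> \<rho> p = 0)"

definition is_net :: "'p set \<Rightarrow> 'p trans set \<Rightarrow> bool" where
  "is_net P T \<longleftrightarrow> finite T \<and> (\<forall>t\<in>T. is_config P (fst t) \<and> is_config P (snd t))"

definition norm_config :: "'p set \<Rightarrow> 'p config \<Rightarrow> nat" where
  "norm_config P \<rho> = Max (insert 0 (\<rho> ` P))"

definition norm_net :: "'p set \<Rightarrow> 'p trans set \<Rightarrow> nat" where
  "norm_net P T = Max (insert 0 (\<Union>t\<in>T. fst t ` P \<union> snd t ` P))"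

definition restr :: "'p set \<Rightarrow> 'p config \<Rightarrow> 'p config" where
  "restr Q \<rho> = (\<lambda>p. if p \<in> Q then \<rho> p else 0)"

definition restr_trans :: "'p set \<Rightarrow> 'p trans \<Rightarrow> 'p trans" where
  "restr_trans Q t = (restr Q (fst t), restr Q (snd t))"

definition restr_net :: "'p set \<Rightarrow> 'p trans set \<Rightarrow> 'p trans set" where
  "restr_net Q T = restr_trans Q ` T"

definition step :: "'p trans \<Rightarrow> 'p config \<Rightarrow> 'p config \<Rightarrow> bool" where
  "step t \<alpha> \<beta> \<longleftrightarrow> (\<exists>\<gamma>. \<alpha> = (\<lambda>p. fst t p + \<gamma> p) \<and> \<beta> = (\<lambda>p. snd t p + \<gamma> p))"

fun run :: "'p trans list \<Rightarrow> 'p config \<Rightarrow> 'p config \<Rightarrow> bool" where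
  "run [] \<alpha> \<beta> \<longleftrightarrow> \<alpha> = \<beta>"
| "run (t # \<sigma>) \<alpha> \<beta> \<longleftrightarrow> (\<exists>\<gamma>. step t \<alpha> \<gamma> \<and> run \<sigma> \<gamma> \<beta>)"

definition reach :: "'p trans set \<Rightarrow> 'p config \<Rightarrow> 'p config \<Rightarrow> bool" where
  "reach T \<alpha> \<beta> \<longleftrightarrow> (\<exists>\<sigma>. set \<sigma> \<subseteq> T \<and> run \<sigma> \<alpha> \<beta>)"

definition component :: "'p trans set \<Rightarrow> 'p config \<Rightarrow> 'p config set" where
  "component T \<rho> = {\<beta>. reach T \<rho> \<beta> \<and> reach T \<beta> \<rho>}"

definition bottom :: "'p trans set \<Rightarrow> 'p config \<Rightarrow> bool" where
  "bottom T \<rho> \<longleftrightarrow> finite (component T \<rho>) \<and> (\<forall>\<beta>. reach T \<rho> \<beta> \<longrightarrow> reach T \<beta> \<rho>)"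

end

theory Submission
  imports Defs "HOL-Library.FuncSet"
begin


lemma step_iff: "step t \<alpha> \<beta> \<longleftrightarrow> (\<forall>p. fst t p \<le> \<alpha> p) \<and> \<beta> = (\<lambda>p. \<alpha> p - fst t p + snd t p)"
proof
  assume "step t \<alpha> \<beta>"
  then obtain \<gamma> where "\<alpha> = (\<lambda>p. fst t p + \<gamma> p)" "\<beta> = (\<lambda>p. snd t p + \<gamma> p)" by (auto simp: step_def)
  then show "(\<forall>p. fst t p \<le> \<alpha> p) \<and> \<beta> = (\<lambda>p. \<alpha> p - fst t p + snd t p)" by auto
next
  assume h: "(\<forall>p. fst t p \<le> \<alpha> p) \<and> \<beta> = (\<lambda>p. \<alpha> p - fst t p + snd t p)"
  show "step t \<alpha> \<beta>" unfolding step_def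
    by (rule exI[of _ "\<lambda>p. \<alpha> p - fst t p"]) (use h in auto)
qed

lemma run_append: "run (\<sigma>1 @ \<sigma>2) x y \<longleftrightarrow> (\<exists>z. run \<sigma>1 x z \<and> run \<sigma>2 z y)"
  by (induction \<sigma>1 arbitrary: x) auto

fun exec :: "'p trans list \<Rightarrow> 'p config \<Rightarrow> 'p config" where
  "exec [] \<alpha> = \<alpha>"
| "exec (t # \<sigma>) \<alpha> = exec \<sigma> (\<lambda>p. \<alpha> p - fst t p + snd t p)"

lemma run_exec: "run \<sigma> x y \<Longrightarrow> y = exec \<sigma> x"
  by (induction \<sigma> arbitrary: x) (auto simp: step_iff)

lemma reach_refl: "reach N x x"
  unfolding reach_def by (rule exI[of _ "[]"]) auto

lemma reach_trans: "reach N x y \<Longrightarrow> reach N y z \<Longrightarrow> reach N x z"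
  unfolding reach_def by (metis Un_subset_iff run_append set_append)

lemma restr_restr: "restr Y (restr X x) = restr (Y \<inter> X) x"
  by (auto simp: restr_def)

lemma restr_trans_restr_trans: "restr_trans Y (restr_trans X t) = restr_trans (Y \<inter> X) t"
  by (simp add: restr_trans_def restr_restr)

lemma step_restr: "step t \<alpha> \<beta> \<Longrightarrow> step (restr_trans X t) (restr X \<alpha>) (restr X \<beta>)"
  by (auto simp: step_iff restr_trans_def restr_def)

lemma run_restr: "run \<sigma> \<alpha> \<beta> \<Longrightarrow> run (map (restr_trans X) \<sigma>) (restr X \<alpha>) (restr X \<beta>)"
  by (induction \<sigma> arbitrary: \<alpha>) (auto intro: step_restr)

lemma reach_restr: "reach N \<alpha> \<beta> \<Longrightarrow> reach (restr_net X N) (restr X \<alpha>) (restr X \<beta>)"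
proof -
  assume "reach N \<alpha> \<beta>"
  then obtain \<sigma> where "set \<sigma> \<subseteq> N" "run \<sigma> \<alpha> \<beta>" by (auto simp: reach_def)
  then show ?thesis unfolding reach_def restr_net_def
    by (intro exI[of _ "map (restr_trans X) \<sigma>"]) (auto intro: run_restr)
qed

lemma restr_net_restr_net: "Y \<subseteq> X \<Longrightarrow> restr_net Y (restr_net X N) = restr_net Y N"
  unfolding restr_net_def image_image restr_trans_restr_trans by (simp add: Int_absorb2)

lemma restr_restr_sub: "Y \<subseteq> X \<Longrightarrow> restr Y (restr X x) = restr Y x"
  by (simp add: restr_restr Int_absorb2)

lemma list_preimage: "set xs \<subseteq> f ` A \<Longrightarrow> \<exists>ys. set ys \<subseteq> A \<and> xs = map f ys"
proof (induction xs)
  case Nil then show ?case by auto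
next
  case (Cons a xs)
  then obtain ys where "set ys \<subseteq> A" "xs = map f ys" by auto
  moreover obtain b where "b \<in> A" "a = f b" using Cons.prems by auto
  ultimately show ?case by (intro exI[of _ "b # ys"]) auto
qed

lemma run_zero_outside:
  assumes "run \<sigma> \<alpha> \<beta>" "set \<sigma> \<subseteq> restr_net X N" "\<forall>p. p \<notin> X \<longrightarrow> \<alpha> p = 0"
  shows "\<forall>p. p \<notin> X \<longrightarrow> \<beta> p = 0"
  using assms
proof (induction \<sigma> arbitrary: \<alpha>)
  case Nil then show ?case by simp
next
  case (Cons t \<sigma>)
  then obtain \<gamma> where g: "step t \<alpha> \<gamma>" "run \<sigma> \<gamma> \<beta>" by auto
  from Cons.prems(2) obtain u where "t = restr_trans X u" by (auto simp: restr_net_def)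
  then have "\<forall>p. p \<notin> X \<longrightarrow> \<gamma> p = 0" using g(1) Cons.prems(3) by (auto simp: step_iff restr_trans_def restr_def)
  then show ?case using Cons g by auto
qed

lemma reach_zero_outside:
  "reach (restr_net X N) \<alpha> \<beta> \<Longrightarrow> \<forall>p. p \<notin> X \<longrightarrow> \<alpha> p = 0 \<Longrightarrow> \<forall>p. p \<notin> X \<longrightarrow> \<beta> p = 0"
  unfolding reach_def using run_zero_outside by blast



lemma run_take_drop:
  assumes "run \<sigma> x y"
  shows "run (take i \<sigma>) x (exec (take i \<sigma>) x) \<and> run (drop i \<sigma>) (exec (take i \<sigma>) x) y"
proof -
  from assms have "run (take i \<sigma> @ drop i \<sigma>) x y" by simp
  then obtain z where "run (take i \<sigma>) x z" "run (drop i \<sigma>) z y" using run_append by metis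
  moreover have "z = exec (take i \<sigma>) x" using run_exec[OF calculation(1)] .
  ultimately show ?thesis by simp
qed

lemma shorten:
  assumes "finite S" "set \<sigma> \<subseteq> N" "run \<sigma> x y" "G y" "\<forall>z. reach N x z \<and> \<not> G z \<longrightarrow> z \<in> S"
  shows "\<exists>\<sigma>' y'. set \<sigma>' \<subseteq> N \<and> run \<sigma>' x y' \<and> G y' \<and> length \<sigma>' \<le> card S"
  using assms(2-4)
proof (induction "length \<sigma>" arbitrary: \<sigma> y rule: less_induct)
  case less
  show ?case
  proof (cases "length \<sigma> \<le> card S")
    case True then show ?thesis using less.prems by blast
  next
    case False
    define n where "n = length \<sigma>"
    define z where "z i = exec (take i \<sigma>) x" for i
    have rz: "run (take i \<sigma>) x (z i)" "run (drop i \<sigma>) (z i) y" for i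
      using run_take_drop[OF less.prems(2)] z_def by auto
    have setT: "set (take i \<sigma>) \<subseteq> N" "set (drop i \<sigma>) \<subseteq> N" for i
      using less.prems(1) set_take_subset set_drop_subset by fastforce+
    show ?thesis
    proof (cases "\<exists>i<n. G (z i)")
      case True
      then obtain i where i: "i < n" "G (z i)" by auto
      have "length (take i \<sigma>) < length \<sigma>" using i n_def by simp
      from less.hyps[OF this setT(1) rz(1) i(2)] show ?thesis .
    next
      case False
      have zS: "z i \<in> S" if "i < n" for i
        using assms(5) False that rz(1)[of i] setT(1)[of i] unfolding reach_def by blast
      have "\<not> inj_on z {..<n}"
      proof
        assume "inj_on z {..<n}"
        then have "card {..<n} \<le> card S"
          using card_inj_on_le[of z "{..<n}" S] zS assms(1) by auto
        then show False using \<open>\<not> length \<sigma> \<le> card S\<close> n_def by simp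
      qed
      then obtain i j where ij: "i < n" "j < n" "i \<noteq> j" "z i = z j"
        unfolding inj_on_def by auto
      obtain i' j' where ij': "i' < j'" "j' < n" "z i' = z j'"
        using ij by (metis linorder_neqE_nat)
      define \<sigma>' where "\<sigma>' = take i' \<sigma> @ drop j' \<sigma>"
      have r': "run \<sigma>' x y" unfolding \<sigma>'_def run_append
        using rz(1)[of i'] rz(2)[of j'] ij'(3) by auto
      have l': "length \<sigma>' < length \<sigma>" unfolding \<sigma>'_def using ij' n_def by simp
      have s': "set \<sigma>' \<subseteq> N" unfolding \<sigma>'_def using setT by auto
      from less.hyps[OF l' s' r' less.prems(3)] show ?thesis .
    qed
  qed
qed



lemma norm_net_ge:
  assumes "finite P" "is_net P T" "t \<in> T" "p \<in> P"
  shows "fst t p \<le> norm_net P T" "snd t p \<le> norm_net P T"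
proof -
  have fin: "finite (insert 0 (\<Union>t\<in>T. fst t ` P \<union> snd t ` P))"
    using assms(1,2) by (auto simp: is_net_def)
  show "fst t p \<le> norm_net P T" unfolding norm_net_def
    by (rule Max_ge[OF fin]) (use assms(3,4) in auto)
  show "snd t p \<le> norm_net P T" unfolding norm_net_def
    by (rule Max_ge[OF fin]) (use assms(3,4) in auto)
qed

lemma net_outside:
  assumes "is_net P T" "t \<in> T" "p \<notin> P"
  shows "fst t p = 0" "snd t p = 0"
  using assms by (auto simp: is_net_def is_config_def)

lemma lift:
  assumes "finite P" "is_net P T" "set \<sigma> \<subseteq> T" "run (map (restr_trans X) \<sigma>) (restr X x) y"
    "\<forall>p\<in>P-X. norm_net P T * length \<sigma> \<le> x p"
  shows "\<exists>x'. run \<sigma> x x' \<and> restr X x' = y \<and> (\<forall>p\<in>P-X. x p \<le> x' p + norm_net P T * length \<sigma>)"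
  using assms(3-5)
proof (induction \<sigma> arbitrary: x)
  case Nil then show ?case by auto
next
  case (Cons t \<sigma>)
  let ?a = "norm_net P T"
  from Cons.prems(2) obtain \<gamma> where g: "step (restr_trans X t) (restr X x) \<gamma>" "run (map (restr_trans X) \<sigma>) \<gamma> y"
    by auto
  have tT: "t \<in> T" using Cons.prems(1) by auto
  define x1 where "x1 = (\<lambda>p. x p - fst t p + snd t p)"
  have en: "fst t p \<le> x p" for p
  proof (cases "p \<in> X")
    case True
    from g(1) have "\<forall>q. restr X (fst t) q \<le> restr X x q" by (simp add: step_iff restr_trans_def)
    from spec[OF this, of p] True show ?thesis by (simp add: restr_def)
  next
    case False
    show ?thesis
    proof (cases "p \<in> P")
      case True
      then have "fst t p \<le> ?a" using norm_net_ge[OF assms(1,2) tT] by auto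
      also have "?a \<le> ?a * length (t # \<sigma>)" by simp
      also have "\<dots> \<le> x p" using Cons.prems(3) True False by auto
      finally show ?thesis .
    next
      case False then show ?thesis using net_outside[OF assms(2) tT] by simp
    qed
  qed
  have st: "step t x x1" unfolding step_iff x1_def using en by auto
  have "\<gamma> = restr X x1" using g(1) en unfolding step_iff x1_def restr_trans_def restr_def by (auto simp: fun_eq_iff)
  have big: "\<forall>p\<in>P-X. ?a * length \<sigma> \<le> x1 p"
  proof
    fix p assume p: "p \<in> P - X"
    have "fst t p \<le> ?a" using norm_net_ge[OF assms(1,2) tT] p by auto
    moreover have "?a * length (t # \<sigma>) \<le> x p" using Cons.prems(3) p by auto
    ultimately show "?a * length \<sigma> \<le> x1 p" unfolding x1_def by simp
  qed
  from Cons.IH[of x1] Cons.prems(1) g(2) \<open>\<gamma> = restr X x1\<close> big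
  obtain x' where x': "run \<sigma> x1 x'" "restr X x' = y" "\<forall>p\<in>P-X. x1 p \<le> x' p + ?a * length \<sigma>"
    by auto
  have "\<forall>p\<in>P-X. x p \<le> x' p + ?a * length (t # \<sigma>)"
  proof
    fix p assume p: "p \<in> P - X"
    have "fst t p \<le> ?a" using norm_net_ge[OF assms(1,2) tT] p by auto
    then show "x p \<le> x' p + ?a * length (t # \<sigma>)" using x'(3) p unfolding x1_def by force
  qed
  then show ?case using st x' by auto
qed

lemma exists_bottom:
  assumes "finite {y. reach N x y}"
  shows "\<exists>y. reach N x y \<and> bottom N y \<and> card (component N y) \<le> card {y. reach N x y}"
proof -
  define f where "f y = card {z. reach N y z}" for y
  obtain y where y: "reach N x y" "\<forall>w. reach N x w \<longrightarrow> f y \<le> f w"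
    using ex_has_least_nat[of "\<lambda>y. reach N x y" x f] reach_refl by blast
  have sub: "{z. reach N y z} \<subseteq> {y. reach N x y}" using y(1) reach_trans by blast
  have fin: "finite {z. reach N y z}" using finite_subset[OF sub assms] .
  have bk: "reach N z y" if hz: "reach N y z" for z
  proof -
    have s2: "{w. reach N z w} \<subseteq> {w. reach N y w}" using hz reach_trans by blast
    have "f y \<le> f z" using y(2) reach_trans[OF y(1) hz] by blast
    then have "card {w. reach N y w} \<le> card {w. reach N z w}" unfolding f_def .
    then have "{w. reach N z w} = {w. reach N y w}" using card_subset_eq[OF fin s2] card_mono[OF fin s2] by linarith
    then show ?thesis using reach_refl[of N y] by blast
  qed
  have csub: "component N y \<subseteq> {z. reach N y z}" unfolding component_def by auto
  have "bottom N y" unfolding bottom_def using finite_subset[OF csub fin] bk by blast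
  moreover have "card (component N y) \<le> card {y. reach N x y}"
    using card_mono[OF fin csub] card_mono[OF assms sub] by linarith
  ultimately show ?thesis using y(1) by blast
qed

lemma card_box:
  assumes "finite C" "finite U" "Q \<inter> U = {}"
  shows "finite {y. restr Q y \<in> C \<and> (\<forall>p\<in>U. y p < h) \<and> (\<forall>p. p \<notin> Q \<union> U \<longrightarrow> y p = 0)}"
    "card {y. restr Q y \<in> C \<and> (\<forall>p\<in>U. y p < h) \<and> (\<forall>p. p \<notin> Q \<union> U \<longrightarrow> y p = 0)} \<le> card C * h ^ card U"
proof -
  let ?S = "{y. restr Q y \<in> C \<and> (\<forall>p\<in>U. y p < h) \<and> (\<forall>p. p \<notin> Q \<union> U \<longrightarrow> y p = 0)}"
  let ?g = "\<lambda>y. (restr Q y, restrict y U)"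
  let ?Tg = "C \<times> PiE U (\<lambda>_. {..<h})"
  have inj: "inj_on ?g ?S"
  proof
    fix y1 y2 assume y1: "y1 \<in> ?S" and y2: "y2 \<in> ?S" and e: "?g y1 = ?g y2"
    show "y1 = y2"
    proof
      fix p
      show "y1 p = y2 p"
      proof (cases "p \<in> Q")
        case True then show ?thesis using e by (metis (no_types) fst_conv restr_def)
      next
        case False
        show ?thesis
        proof (cases "p \<in> U")
          case True then show ?thesis using e by (metis (no_types) snd_conv restrict_apply')
        next
          case False then show ?thesis using y1 y2 \<open>p \<notin> Q\<close> by auto
        qed
      qed
    qed
  qed
  have im: "?g ` ?S \<subseteq> ?Tg" by (auto simp: PiE_def extensional_def)
  have finT: "finite ?Tg" using assms(1,2) by (simp add: finite_PiE)
  show "finite ?S" using finite_imageD[OF finite_subset[OF im finT] inj] .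
  have "card ?S \<le> card ?Tg" using card_inj_on_le[OF inj im finT] .
  also have "card ?Tg = card C * h ^ card U" using card_PiE[OF assms(2), of "\<lambda>_. {..<h}"] by (simp add: card_cartesian_product)
  finally show "card ?S \<le> card C * h ^ card U" .
qed



fun Gf :: "nat \<Rightarrow> nat \<Rightarrow> nat \<Rightarrow> nat" where
  "Gf K c 0 = K"
| "Gf K c (Suc j) = Gf K c j + c * Gf K c j ^ Suc j"

fun Lsum :: "nat \<Rightarrow> nat \<Rightarrow> nat \<Rightarrow> nat \<Rightarrow> nat" where
  "Lsum s K c 0 = s"
| "Lsum s K c (Suc j) = s * Gf K c j ^ Suc j + Lsum s K c j"

context
  fixes P Q :: "'p set" and T :: "'p trans set" and \<rho> :: "'p config"
  assumes fP: "finite P" and net: "is_net P T" and Qsub: "Q \<subseteq> P"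
    and bot: "bottom (restr_net Q T) (restr Q \<rho>)"
begin

abbreviation "CC \<equiv> component (restr_net Q T) (restr Q \<rho>)"

lemma C_closed: "z \<in> CC \<Longrightarrow> reach (restr_net Q T) z w \<Longrightarrow> w \<in> CC"
  using bot unfolding bottom_def component_def by (auto intro: reach_trans)

lemma inC: "reach T \<rho> x \<Longrightarrow> restr Q x \<in> CC"
proof -
  assume "reach T \<rho> x"
  then have "reach (restr_net Q T) (restr Q \<rho>) (restr Q x)" by (rule reach_restr)
  then show ?thesis using C_closed[of "restr Q \<rho>"] reach_refl
    unfolding component_def by auto
qed

lemma fin_C: "finite CC" using bot by (simp add: bottom_def)

lemma rho_le: "p \<in> P \<Longrightarrow> \<rho> p \<le> norm_config P \<rho>"
  unfolding norm_config_def by (rule Max_ge) (use fP in auto)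

lemma claim:
  fixes j :: nat
  defines "a \<equiv> norm_net P T" and "s \<equiv> card CC"
  defines "K \<equiv> 1 + s * a + norm_config P \<rho>" and "c \<equiv> a * s"
  shows "U \<subseteq> P - Q \<Longrightarrow> card U = j \<Longrightarrow> reach T \<rho> x \<Longrightarrow> \<forall>p\<in>(P-Q)-U. Gf K c j \<le> x p
    \<Longrightarrow> \<forall>i<j. s * Gf K c i ^ Suc i \<le> Bd
    \<Longrightarrow> \<exists>\<sigma> \<rho>'. set \<sigma> \<subseteq> T \<and> length \<sigma> \<le> Lsum s K c j \<and> run \<sigma> x \<rho>' \<and>
           ((restr Q \<rho>' = restr Q \<rho> \<and> (\<forall>p\<in>P - Q. \<rho>' p > \<rho> p)) \<or>
            (\<exists>Q'. Q \<subset> Q' \<and> Q' \<subseteq> P \<and> bottom (restr_net Q' T) (restr Q' \<rho>') \<and>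
                  card (component (restr_net Q' T) (restr Q' \<rho>')) \<le> Bd))"
proof (induction j arbitrary: U x)
  case 0
  have U0: "U = {}" using 0 fP finite_subset by fastforce
  have xC: "restr Q x \<in> CC" using inC[OF 0(3)] .
  then have "reach (restr_net Q T) (restr Q x) (restr Q \<rho>)" unfolding component_def by auto
  then obtain \<sigma>1 where s1: "set \<sigma>1 \<subseteq> restr_net Q T" "run \<sigma>1 (restr Q x) (restr Q \<rho>)"
    unfolding reach_def by auto
  have "\<forall>z. reach (restr_net Q T) (restr Q x) z \<and> \<not> z = restr Q \<rho> \<longrightarrow> z \<in> CC"
    using C_closed[OF xC] by auto
  from shorten[OF fin_C s1 _ this] obtain \<sigma>2 where
    s2: "set \<sigma>2 \<subseteq> restr_net Q T" "run \<sigma>2 (restr Q x) (restr Q \<rho>)" "length \<sigma>2 \<le> s"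
    unfolding s_def by auto
  obtain \<tau> where tau: "set \<tau> \<subseteq> T" "\<sigma>2 = map (restr_trans Q) \<tau>"
    using list_preimage[OF s2(1)[unfolded restr_net_def]] by auto
  have lt: "length \<tau> \<le> s" using s2(3) tau(2) by simp
  have big: "\<forall>p\<in>P-Q. a * length \<tau> \<le> x p"
  proof
    fix p assume p: "p \<in> P - Q"
    have "a * length \<tau> \<le> a * s" using lt by simp
    also have "\<dots> \<le> K" unfolding K_def by simp
    also have "\<dots> \<le> x p" using 0(4) U0 p by simp
    finally show "a * length \<tau> \<le> x p" .
  qed
  from lift[OF fP net tau(1), of Q x "restr Q \<rho>"] s2(2) tau(2) big
  obtain x' where x': "run \<tau> x x'" "restr Q x' = restr Q \<rho>" "\<forall>p\<in>P-Q. x p \<le> x' p + a * length \<tau>"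
    unfolding a_def by auto
  have "\<forall>p\<in>P - Q. x' p > \<rho> p"
  proof
    fix p assume p: "p \<in> P - Q"
    have "K \<le> x p" using 0(4) U0 p by simp
    moreover have "a * length \<tau> \<le> a * s" using lt by simp
    moreover have "\<rho> p \<le> norm_config P \<rho>" using rho_le p by auto
    moreover have "x p \<le> x' p + a * length \<tau>" using x'(3) p by blast
    moreover have "s * a = a * s" by simp
    ultimately show "x' p > \<rho> p" unfolding K_def by linarith
  qed
  then show ?case using x' tau(1) lt by auto
next
  case (Suc j)
  define X where "X = Q \<union> U"
  define h where "h = Gf K c j"
  define Box where "Box = {y. restr Q y \<in> CC \<and> (\<forall>p\<in>U. y p < h) \<and> (\<forall>p. p \<notin> Q \<union> U \<longrightarrow> y p = 0)}"
  define Rs where "Rs = {y. reach (restr_net X T) (restr X x) y}"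
  have finU: "finite U" using Suc.prems(1) fP finite_subset by blast
  have QU: "Q \<inter> U = {}" using Suc.prems(1) by auto
  have finBox: "finite Box" unfolding Box_def using card_box(1)[OF fin_C finU QU] .
  have cardBox: "card Box \<le> s * h ^ Suc j" unfolding Box_def s_def
    using card_box(2)[OF fin_C finU QU, of h] Suc.prems(2) by simp
  have xC: "restr Q x \<in> CC" using inC[OF Suc.prems(3)] .
  have Rs_prop: "restr Q y \<in> CC \<and> (\<forall>p. p \<notin> Q \<union> U \<longrightarrow> y p = 0)" if "y \<in> Rs" for y
  proof
    have "reach (restr_net Q (restr_net X T)) (restr Q (restr X x)) (restr Q y)"
      using reach_restr that Rs_def by blast
    then have "reach (restr_net Q T) (restr Q x) (restr Q y)"
      by (simp add: restr_net_restr_net restr_restr_sub X_def)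
    then show "restr Q y \<in> CC" using C_closed[OF xC] by blast
    have "\<forall>p. p \<notin> X \<longrightarrow> restr X x p = 0" by (simp add: restr_def)
    then show "\<forall>p. p \<notin> Q \<union> U \<longrightarrow> y p = 0" using reach_zero_outside that Rs_def X_def by blast
  qed
  have PX: "P - X = (P - Q) - U" unfolding X_def by auto
  have xbig: "\<forall>p\<in>P - X. h + a * (s * h ^ Suc j) \<le> x p"
    using Suc.prems(4) PX unfolding h_def c_def by (simp add: mult.assoc)
  have Bd_j: "s * h ^ Suc j \<le> Bd" using Suc.prems(5) h_def by auto
  have QX: "Q \<subset> X" "X \<subseteq> P"
  proof -
    have "U \<noteq> {}" using Suc.prems(2) by auto
    then show "Q \<subset> X" unfolding X_def using QU by auto
    show "X \<subseteq> P" unfolding X_def using Qsub Suc.prems(1) by auto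
  qed
  show ?case
  proof (cases "\<forall>y\<in>Rs. \<forall>p\<in>U. y p < h")
    case True
    have RsBox: "Rs \<subseteq> Box" using True Rs_prop unfolding Box_def by auto
    have finRs: "finite Rs" using finite_subset[OF RsBox finBox] .
    have cardRs: "card Rs \<le> s * h ^ Suc j" using card_mono[OF finBox RsBox] cardBox by linarith
    from exists_bottom[OF finRs[unfolded Rs_def]] obtain y0 where
      y0: "reach (restr_net X T) (restr X x) y0" "bottom (restr_net X T) y0"
          "card (component (restr_net X T) y0) \<le> card Rs" unfolding Rs_def by auto
    from y0(1) obtain \<sigma>1 where s1: "set \<sigma>1 \<subseteq> restr_net X T" "run \<sigma>1 (restr X x) y0"
      unfolding reach_def by auto
    have "\<forall>z. reach (restr_net X T) (restr X x) z \<and> \<not> z = y0 \<longrightarrow> z \<in> Rs"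
      unfolding Rs_def by auto
    from shorten[OF finRs s1 _ this] obtain \<sigma>2 where
      s2: "set \<sigma>2 \<subseteq> restr_net X T" "run \<sigma>2 (restr X x) y0" "length \<sigma>2 \<le> card Rs"
      by auto
    obtain \<tau> where tau: "set \<tau> \<subseteq> T" "\<sigma>2 = map (restr_trans X) \<tau>"
      using list_preimage[OF s2(1)[unfolded restr_net_def]] by auto
    have lt: "length \<tau> \<le> s * h ^ Suc j" using s2(3) tau(2) cardRs by simp
    have big: "\<forall>p\<in>P-X. a * length \<tau> \<le> x p"
    proof
      fix p assume p: "p \<in> P - X"
      have "a * length \<tau> \<le> a * (s * h ^ Suc j)" using lt by simp
      moreover have "h + a * (s * h ^ Suc j) \<le> x p" using xbig p by blast
      ultimately show "a * length \<tau> \<le> x p" by linarith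
    qed
    from lift[OF fP net tau(1), of X x y0] s2(2) tau(2) big
    obtain x' where x': "run \<tau> x x'" "restr X x' = y0"
      unfolding a_def by auto
    have "length \<tau> \<le> Lsum s K c (Suc j)" using lt h_def by simp
    moreover have "card (component (restr_net X T) (restr X x')) \<le> Bd"
      using x'(2) y0(3) cardRs Bd_j by simp
    ultimately show ?thesis using x' tau(1) QX y0(2) by blast
  next
    case False
    then obtain y p where yp: "y \<in> Rs" "p \<in> U" "h \<le> y p" by (auto simp: not_less)
    from yp(1) obtain \<sigma>1 where s1: "set \<sigma>1 \<subseteq> restr_net X T" "run \<sigma>1 (restr X x) y"
      unfolding reach_def Rs_def by auto
    have "\<forall>z. reach (restr_net X T) (restr X x) z \<and> \<not> (\<exists>p\<in>U. h \<le> z p) \<longrightarrow> z \<in> Box"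
      using Rs_prop unfolding Box_def Rs_def by (auto simp: not_le)
    from shorten[OF finBox s1 _ this] yp obtain \<sigma>2 y1 where
      s2: "set \<sigma>2 \<subseteq> restr_net X T" "run \<sigma>2 (restr X x) y1" "\<exists>p\<in>U. h \<le> y1 p" "length \<sigma>2 \<le> card Box"
      by blast
    obtain \<tau> where tau: "set \<tau> \<subseteq> T" "\<sigma>2 = map (restr_trans X) \<tau>"
      using list_preimage[OF s2(1)[unfolded restr_net_def]] by auto
    have lt: "length \<tau> \<le> s * h ^ Suc j" using s2(4) tau(2) cardBox by simp
    have big: "\<forall>p\<in>P-X. a * length \<tau> \<le> x p"
    proof
      fix p assume p: "p \<in> P - X"
      have "a * length \<tau> \<le> a * (s * h ^ Suc j)" using lt by simp
      moreover have "h + a * (s * h ^ Suc j) \<le> x p" using xbig p by blast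
      ultimately show "a * length \<tau> \<le> x p" by linarith
    qed
    from lift[OF fP net tau(1), of X x y1] s2(2) tau(2) big
    obtain x1 where x1: "run \<tau> x x1" "restr X x1 = y1" "\<forall>p\<in>P-X. x p \<le> x1 p + a * length \<tau>"
      unfolding a_def by auto
    from s2(3) obtain p0 where p0: "p0 \<in> U" "h \<le> y1 p0" by auto
    have x1p0: "h \<le> x1 p0" using p0 x1(2) unfolding X_def restr_def by auto
    have r1: "reach T \<rho> x1" using Suc.prems(3) x1(1) tau(1) reach_trans unfolding reach_def by blast
    have IHprem: "\<forall>p\<in>(P-Q)-(U-{p0}). Gf K c j \<le> x1 p"
    proof
      fix p assume p: "p \<in> (P-Q)-(U-{p0})"
      show "Gf K c j \<le> x1 p"
      proof (cases "p = p0")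
        case True then show ?thesis using x1p0 h_def by simp
      next
        case False
        then have pX: "p \<in> P - X" using p PX by auto
        have "a * length \<tau> \<le> a * (s * h ^ Suc j)" using lt by simp
        moreover have "h + a * (s * h ^ Suc j) \<le> x p" using xbig pX by blast
        moreover have "x p \<le> x1 p + a * length \<tau>" using x1(3) pX by blast
        ultimately show ?thesis unfolding h_def by linarith
      qed
    qed
    have cU: "card (U - {p0}) = j" using Suc.prems(2) p0(1) finU by simp
    have Usub: "U - {p0} \<subseteq> P - Q" using Suc.prems(1) by auto
    have Bdj: "\<forall>i<j. s * Gf K c i ^ Suc i \<le> Bd" using Suc.prems(5) by auto
    from Suc.IH[OF Usub cU r1 IHprem Bdj]
    obtain \<sigma>3 \<rho>' where s3: "set \<sigma>3 \<subseteq> T" "length \<sigma>3 \<le> Lsum s K c j" "run \<sigma>3 x1 \<rho>'"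
      "((restr Q \<rho>' = restr Q \<rho> \<and> (\<forall>p\<in>P - Q. \<rho>' p > \<rho> p)) \<or>
            (\<exists>Q'. Q \<subset> Q' \<and> Q' \<subseteq> P \<and> bottom (restr_net Q' T) (restr Q' \<rho>') \<and>
                  card (component (restr_net Q' T) (restr Q' \<rho>')) \<le> Bd))"
      by auto
    have "run (\<tau> @ \<sigma>3) x \<rho>'" using x1(1) s3(3) run_append by blast
    moreover have "length (\<tau> @ \<sigma>3) \<le> Lsum s K c (Suc j)" using lt s3(2) h_def by simp
    moreover have "set (\<tau> @ \<sigma>3) \<subseteq> T" using tau(1) s3(1) by simp
    ultimately show ?thesis using s3(4) by blast
  qed
qed

end



lemma pow_aux: "1 + Suc m ^ Suc m \<le> Suc (Suc m) ^ Suc m"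
proof -
  have a: "Suc m ^ m \<le> Suc (Suc m) ^ m" by (rule power_mono) auto
  have b: "1 \<le> Suc (Suc m) ^ m" by simp
  have "Suc (Suc m) ^ Suc m = Suc (Suc m) ^ m * Suc m + Suc (Suc m) ^ m" by simp
  moreover have "Suc m ^ Suc m = Suc m ^ m * Suc m" by simp
  moreover have "Suc m ^ m * Suc m \<le> Suc (Suc m) ^ m * Suc m" using mult_right_mono[OF a] by blast
  ultimately show ?thesis using b by linarith
qed

lemma Gf_ge: "K \<le> Gf K c i"
  by (induction i) auto

lemma Gf_bound:
  assumes "1 + c \<le> K"
  shows "Gf K c i \<le> K ^ (Suc i ^ i)"
proof (induction i)
  case 0 then show ?case by simp
next
  case (Suc i)
  let ?G = "Gf K c i"
  have K1: "1 \<le> K" using assms by simp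
  have G1: "1 \<le> ?G" using Gf_ge[of K c i] K1 by linarith
  have "?G \<le> ?G ^ Suc i" using G1 by (metis One_nat_def Suc_le_eq power_increasing power_one_right zero_less_Suc)
  then have "Gf K c (Suc i) \<le> (1 + c) * ?G ^ Suc i" by simp
  also have "\<dots> \<le> K * (K ^ (Suc i ^ i)) ^ Suc i"
    using assms Suc.IH by (intro mult_mono power_mono) auto
  also have "\<dots> = K ^ (1 + Suc i ^ Suc i)"
  proof -
    have "(K ^ (Suc i ^ i)) ^ Suc i = K ^ (Suc i ^ i * Suc i)" by (rule power_mult[symmetric])
    also have "Suc i ^ i * Suc i = Suc i ^ Suc i" by (simp only: power_Suc2)
    finally show ?thesis by simp
  qed
  also have "\<dots> \<le> K ^ (Suc (Suc i) ^ Suc i)" using K1 pow_aux[of i] by (intro power_increasing) auto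
  finally show ?case .
qed

lemma Gf_pow_bound:
  assumes "1 + c \<le> K" "i < d"
  shows "Gf K c i ^ Suc i \<le> K ^ (d ^ d)"
proof -
  have K1: "1 \<le> K" using assms by simp
  have "Gf K c i ^ Suc i \<le> (K ^ (Suc i ^ i)) ^ Suc i" using Gf_bound[OF assms(1)] by (rule power_mono) simp
  also have "\<dots> = K ^ (Suc i ^ Suc i)"
  proof -
    have "(K ^ (Suc i ^ i)) ^ Suc i = K ^ (Suc i ^ i * Suc i)" by (rule power_mult[symmetric])
    also have "Suc i ^ i * Suc i = Suc i ^ Suc i" by (simp only: power_Suc2)
    finally show ?thesis .
  qed
  also have "\<dots> \<le> K ^ (d ^ d)"
  proof (rule power_increasing[OF _ K1])
    have "Suc i ^ Suc i \<le> d ^ Suc i" using assms(2) by (intro power_mono) auto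
    also have "\<dots> \<le> d ^ d" using assms(2) by (intro power_increasing) auto
    finally show "Suc i ^ Suc i \<le> d ^ d" .
  qed
  finally show ?thesis .
qed

lemma Lsum_bound:
  assumes "1 + c \<le> K" "j \<le> d"
  shows "Lsum s K c j \<le> s + j * (s * K ^ (d ^ d))"
  using assms(2)
proof (induction j)
  case 0 then show ?case by simp
next
  case (Suc j)
  have "s * Gf K c j ^ Suc j \<le> s * K ^ (d ^ d)" using Gf_pow_bound[OF assms(1)] Suc.prems by simp
  moreover have "Lsum s K c j \<le> s + j * (s * K ^ (d ^ d))" using Suc by simp
  ultimately have "s * Gf K c j ^ Suc j + Lsum s K c j \<le> s * K ^ (d ^ d) + (s + j * (s * K ^ (d ^ d)))"
    by (rule add_mono)
  then show ?case by (simp only: Lsum.simps) (simp add: algebra_simps)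
qed


theorem lemma6p2:
  fixes P Q :: "'p set" and T :: "'p trans set" and \<rho> :: "'p config"
  assumes "finite P"
    and "is_net P T"
    and "is_config P \<rho>"
    and "Q \<subseteq> P"
    and "bottom (restr_net Q T) (restr Q \<rho>)"
  defines "s \<equiv> card (component (restr_net Q T) (restr Q \<rho>))"
    and "d \<equiv> card (P - Q)"
  defines "B \<equiv> (1 + d * (1 + s * norm_net P T + norm_config P \<rho>) ^ (d ^ d)) * s"
  shows "\<exists>\<sigma> \<rho>'. set \<sigma> \<subseteq> T \<and> length \<sigma> \<le> B \<and> run \<sigma> \<rho> \<rho>' \<and>
           ((restr Q \<rho>' = restr Q \<rho> \<and> (\<forall>p\<in>P - Q. \<rho>' p > \<rho> p)) \<or>
            (\<exists>Q'. Q \<subset> Q' \<and> Q' \<subseteq> P \<and> bottom (restr_net Q' T) (restr Q' \<rho>') \<and>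
                  card (component (restr_net Q' T) (restr Q' \<rho>')) \<le> B))"
proof -
  define a where "a = norm_net P T"
  define K where "K = 1 + s * a + norm_config P \<rho>"
  define c where "c = a * s"
  have cK: "1 + c \<le> K" unfolding K_def c_def by (simp add: mult.commute)
  have Beq: "B = s + d * (s * K ^ (d ^ d))" unfolding B_def K_def a_def by (simp add: algebra_simps)
  have Bd: "\<forall>i<d. s * Gf K c i ^ Suc i \<le> B"
  proof (intro allI impI)
    fix i assume i: "i < d"
    have "s * Gf K c i ^ Suc i \<le> s * K ^ (d ^ d)" using Gf_pow_bound[OF cK i] by simp
    also have "\<dots> \<le> d * (s * K ^ (d ^ d))" using i by simp
    finally have "s * Gf K c i ^ Suc i \<le> d * (s * K ^ (d ^ d))" .
    then show "s * Gf K c i ^ Suc i \<le> B" unfolding Beq by linarith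
  qed
  have "\<forall>p\<in>(P-Q)-(P-Q). Gf K c d \<le> \<rho> p" by simp
  from claim[OF assms(1,2,4,5) _ _ reach_refl[of T \<rho>], of "P - Q" d B, folded a_def s_def, folded K_def c_def]
    Bd this d_def
  obtain \<sigma> \<rho>' where r: "set \<sigma> \<subseteq> T" "length \<sigma> \<le> Lsum s K c d" "run \<sigma> \<rho> \<rho>'"
    "((restr Q \<rho>' = restr Q \<rho> \<and> (\<forall>p\<in>P - Q. \<rho>' p > \<rho> p)) \<or>
            (\<exists>Q'. Q \<subset> Q' \<and> Q' \<subseteq> P \<and> bottom (restr_net Q' T) (restr Q' \<rho>') \<and>
                  card (component (restr_net Q' T) (restr Q' \<rho>')) \<le> B))"
    by auto
  have "length \<sigma> \<le> B" using r(2) Lsum_bound[OF cK, of d d s] Beq by simp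
  then show ?thesis using r by blast
qed

end
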